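(* Let $\Omega\subset\mathbb{R}^n$ be a bounded domain, $\omega\subset\Omega$ a nonempty open set, and $m\ge2$, $k\ge1$ integers. Assume (D1): $\lambda_1<\lambda_2<\cdots<\lambda_m$, and (D2): $\langle\chi_\omega\xi_i,\xi_j\rangle\neq0$ for all $i\in\{1,\dots,m\}$ and $j\in\{1,\dots,k\}$. Then for each $y_0\in L^2(\Omega)$ with $y_0\notin\mathcal{S}_m$ and each finite sequence of positive numbers $\{\bar a_i\}_{i=1}^k$, Problem $(\mathcal{P})$ with $\{\bar a_i\}_{i=1}^k$ has an optimal control.
   Context: $\chi_\omega$ is the characteristic function of $\omega$. Let $\{\xi_i\}_{i\ge1}$ be an orthonormal basis of $L^2(\Omega)$ consisting of eigenfunctions of $-\Delta$ with homogeneous Dirichlet boundary condition, with eigenvalues $0<\lambda_1<\lambda_2\le\lambda_3\le\cdots\to+\infty$; $\langle\cdot,\cdot\rangle$ is the $L^2(\Omega)$ inner product. For $u$ and $y_0\in L^2(\Omega)$, $y(\cdot;u,y_0):\mathbb{R}^+\to L^2(\Omega)$ denotes the solution of $\partial_t y-\Delta y=\chi_\omega u$ in $\Omega\times\mathbb{R}^+$, $y=0$ on $\partial\Omega\times\mathbb{R}^+$, $y(\cdot,0)=y_0$. $\mathcal{S}_m=\mathrm{span}\{\xi_{m+1},\xi_{m+2},\dots\}$ (closed linear span, i.e. the set of $y$ with $\langle y,\xi_i\rangle=0$ for $i\le m$). The control constraint set is $\mathcal{U}_{\{\bar a_i\}_{i=1}^k}=\{\sum_{i=1}^k\alpha_i(\cdot)\xi_i:\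 \alpha_i \text{ measurable from }\mathbb{R}^+\text{ to }[-\bar a_i,\bar a_i]\}$. Problem $(\mathcal{P})$ with $\{\bar a_i\}_{i=1}^k$: $\inf\{t\ge0: y(t;u,y_0)\in\mathcal{S}_m\}$ over $u\in\mathcal{U}_{\{\bar a_i\}_{i=1}^k}$; an optimal control is an admissible $u^*$ with $y(t^*;u^*,y_0)\in\mathcal{S}_m$, $t^*$ being the infimum (in particular the admissible set of controls reaching $\mathcal{S}_m$ is nonempty). *)

theory Defs
  imports "HOL-Analysis.Analysis"
begin

definition L2 :: "'a::euclidean_space set \<Rightarrow> ('a \<Rightarrow> real) set" where
  "L2 \<Omega> = {f. f \<in> borel_measurable (lebesgue_on \<Omega>) \<and> integrable (lebesgue_on \<Omega>) (\<lambda>x. (f x)\<^sup>2)}"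

definition l2_inner :: "'a::euclidean_space set \<Rightarrow> ('a \<Rightarrow> real) \<Rightarrow> ('a \<Rightarrow> real) \<Rightarrow> real" where
  "l2_inner \<Omega> f g = (\<integral>x. f x * g x \<partial>(lebesgue_on \<Omega>))"

definition orthonormal_basis_L2 :: "'a::euclidean_space set \<Rightarrow> (nat \<Rightarrow> 'a \<Rightarrow> real) \<Rightarrow> bool" where
  "orthonormal_basis_L2 \<Omega> \<xi> \<longleftrightarrow>
     (\<forall>i\<ge>1. \<xi> i \<in> L2 \<Omega>) \<and>
     (\<forall>i\<ge>1. \<forall>j\<ge>1. l2_inner \<Omega> (\<xi> i) (\<xi> j) = (if i = j then 1 else 0)) \<and>
     (\<forall>f \<in> L2 \<Omega>. (\<forall>i\<ge>1. l2_inner \<Omega> f (\<xi> i) = 0) \<longrightarrow> (AE x in lebesgue_on \<Omega>. f x = 0))"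

definition pdiff :: "'a::euclidean_space \<Rightarrow> ('a \<Rightarrow> real) \<Rightarrow> 'a \<Rightarrow> real" where
  "pdiff b \<phi> = (\<lambda>x. deriv (\<lambda>t. \<phi> (x + t *\<^sub>R b)) 0)"

text \<open>C^infinity: every iterated partial derivative exists and is (Frechet) differentiable.\<close>
definition smooth_fun :: "('a::euclidean_space \<Rightarrow> real) \<Rightarrow> bool" where
  "smooth_fun \<phi> \<longleftrightarrow> (\<forall>bs. set bs \<subseteq> Basis \<longrightarrow> (\<forall>x. foldr pdiff bs \<phi> differentiable (at x)))"

definition grad :: "('a::euclidean_space \<Rightarrow> real) \<Rightarrow> 'a \<Rightarrow> 'a" where
  "grad \<phi> x = (\<Sum>b\<in>Basis. pdiff b \<phi> x *\<^sub>R b)"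

definition test_fun :: "'a::euclidean_space set \<Rightarrow> ('a \<Rightarrow> real) \<Rightarrow> bool" where
  "test_fun \<Omega> \<phi> \<longleftrightarrow> smooth_fun \<phi> \<and> compact (closure {x. \<phi> x \<noteq> 0}) \<and> closure {x. \<phi> x \<noteq> 0} \<subseteq> \<Omega>"

definition weak_grad :: "'a::euclidean_space set \<Rightarrow> ('a \<Rightarrow> real) \<Rightarrow> ('a \<Rightarrow> 'a) \<Rightarrow> bool" where
  "weak_grad \<Omega> f G \<longleftrightarrow>
     (\<forall>b\<in>Basis. (\<lambda>x. G x \<bullet> b) \<in> L2 \<Omega>) \<and>
     (\<forall>\<phi>. test_fun \<Omega> \<phi> \<longrightarrow> (\<forall>b\<in>Basis.
        (\<integral>x. f x * pdiff b \<phi> x \<partial>(lebesgue_on \<Omega>)) = - (\<integral>x. (G x \<bullet> b) * \<phi> x \<partial>(lebesgue_on \<Omega>))))"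

text \<open>f in H^1_0(Omega) with weak gradient G: f in H^1(Omega) and f is the H^1-limit of test functions.\<close>
definition H01 :: "'a::euclidean_space set \<Rightarrow> ('a \<Rightarrow> real) \<Rightarrow> ('a \<Rightarrow> 'a) \<Rightarrow> bool" where
  "H01 \<Omega> f G \<longleftrightarrow> f \<in> L2 \<Omega> \<and> weak_grad \<Omega> f G \<and>
     (\<exists>\<phi>s. (\<forall>n. test_fun \<Omega> (\<phi>s n)) \<and>
        (\<lambda>n. (\<integral>x. (f x - \<phi>s n x)\<^sup>2 \<partial>(lebesgue_on \<Omega>))
            + (\<integral>x. (norm (G x - grad (\<phi>s n) x))\<^sup>2 \<partial>(lebesgue_on \<Omega>))) \<longlonglongrightarrow> 0)"

definition dirichlet_eigenfun :: "'a::euclidean_space set \<Rightarrow> ('a \<Rightarrow> real) \<Rightarrow> real \<Rightarrow> bool" where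
  "dirichlet_eigenfun \<Omega> \<xi> lam \<longleftrightarrow>
     (\<exists>G. H01 \<Omega> \<xi> G \<and>
        (\<forall>\<phi>. test_fun \<Omega> \<phi> \<longrightarrow>
           (\<integral>x. G x \<bullet> grad \<phi> x \<partial>(lebesgue_on \<Omega>)) = lam * (\<integral>x. \<xi> x * \<phi> x \<partial>(lebesgue_on \<Omega>))))"

text \<open>S_m = closed span of xi_{m+1}, xi_{m+2}, ...\<close>
definition S_set :: "'a::euclidean_space set \<Rightarrow> (nat \<Rightarrow> 'a \<Rightarrow> real) \<Rightarrow> nat \<Rightarrow> ('a \<Rightarrow> real) set" where
  "S_set \<Omega> \<xi> m = {y \<in> L2 \<Omega>. \<forall>i\<in>{1..m}. l2_inner \<Omega> y (\<xi> i) = 0}"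

text \<open>Control u = sum_{i=1}^k alpha_i xi_i with alpha_i measurable, values in [-abar_i, abar_i].\<close>
definition admissible :: "nat \<Rightarrow> (nat \<Rightarrow> real) \<Rightarrow> (nat \<Rightarrow> real \<Rightarrow> real) \<Rightarrow> bool" where
  "admissible k abar \<alpha> \<longleftrightarrow>
     (\<forall>i\<in>{1..k}. \<alpha> i \<in> borel_measurable (lebesgue_on {0..}) \<and> (\<forall>s\<ge>0. \<bar>\<alpha> i s\<bar> \<le> abar i))"

text \<open>Fourier coefficient <y(t; u, y0), xi_j> of the (mild) solution of
  y_t - Laplace y = chi_omega u, y = 0 on the boundary, y(0) = y0, with u = sum_{i=1}^k alpha_i xi_i
  (Duhamel formula in the eigenbasis).\<close>
definition sol_coeff :: "'a::euclidean_space set \<Rightarrow> 'a set \<Rightarrow> (nat \<Rightarrow> 'a \<Rightarrow> real) \<Rightarrow> (nat \<Rightarrow> real)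
     \<Rightarrow> nat \<Rightarrow> (nat \<Rightarrow> real \<Rightarrow> real) \<Rightarrow> ('a \<Rightarrow> real) \<Rightarrow> nat \<Rightarrow> real \<Rightarrow> real" where
  "sol_coeff \<Omega> \<omega> \<xi> lam k \<alpha> y0 j t =
     exp (- lam j * t) * l2_inner \<Omega> y0 (\<xi> j) +
     (\<Sum>i=1..k. (LINT s:{0..t}|lebesgue. exp (- lam j * (t - s)) * \<alpha> i s) *
                l2_inner \<Omega> (\<lambda>x. indicator \<omega> x * \<xi> i x) (\<xi> j))"

text \<open>y(t; u, y0) belongs to S_m.\<close>
definition reaches :: "'a::euclidean_space set \<Rightarrow> 'a set \<Rightarrow> (nat \<Rightarrow> 'a \<Rightarrow> real) \<Rightarrow> (nat \<Rightarrow> real)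
     \<Rightarrow> nat \<Rightarrow> nat \<Rightarrow> (nat \<Rightarrow> real \<Rightarrow> real) \<Rightarrow> ('a \<Rightarrow> real) \<Rightarrow> real \<Rightarrow> bool" where
  "reaches \<Omega> \<omega> \<xi> lam m k \<alpha> y0 t \<longleftrightarrow> (\<forall>j\<in>{1..m}. sol_coeff \<Omega> \<omega> \<xi> lam k \<alpha> y0 j t = 0)"

definition has_optimal_control :: "'a::euclidean_space set \<Rightarrow> 'a set \<Rightarrow> (nat \<Rightarrow> 'a \<Rightarrow> real) \<Rightarrow> (nat \<Rightarrow> real)
     \<Rightarrow> nat \<Rightarrow> nat \<Rightarrow> (nat \<Rightarrow> real) \<Rightarrow> ('a \<Rightarrow> real) \<Rightarrow> bool" where
  "has_optimal_control \<Omega> \<omega> \<xi> lam m k abar y0 \<longleftrightarrow>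
     (\<exists>\<alpha>s ts. admissible k abar \<alpha>s \<and> ts \<ge> 0 \<and> reaches \<Omega> \<omega> \<xi> lam m k \<alpha>s y0 ts \<and>
        ts = Inf {t. t \<ge> 0 \<and> (\<exists>\<alpha>. admissible k abar \<alpha> \<and> reaches \<Omega> \<omega> \<xi> lam m k \<alpha> y0 t)})"

end

theory Submission
  imports Defs "Jordan_Normal_Form.Determinant"
begin



lemma meas_id_leb [measurable]: "(\<lambda>x::real. x) \<in> borel_measurable (lebesgue_on S)"
  by (simp add: measurable_completion measurable_restrict_space1)

lemma lint_eq_leb_on:
  fixes f :: "real \<Rightarrow> real"
  assumes "S \<in> sets lebesgue"
  shows "(LINT s:S|lebesgue. f s) = integral\<^sup>L (lebesgue_on S) f"
proof -
  have "S \<inter> space lebesgue \<in> sets lebesgue" using assms by simp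
  from integral_restrict_space[OF this, of f] show ?thesis by (simp add: set_lebesgue_integral_def)
qed

lemma meas_mono0:
  assumes "f \<in> borel_measurable (lebesgue_on {0::real..})"
  shows "f \<in> borel_measurable (lebesgue_on {0..t})"
  using measurable_restrict_mono[OF assms] by auto

lemma integrable_bdd:
  fixes f :: "real \<Rightarrow> real"
  assumes "f \<in> borel_measurable (lebesgue_on {a..b})" "\<And>s. a \<le> s \<Longrightarrow> s \<le> b \<Longrightarrow> \<bar>f s\<bar> \<le> B"
  shows "integrable (lebesgue_on {a..b}) f"
proof -
  have fm: "finite_measure (lebesgue_on {a..b})"
    by (rule finite_measure_lebesgue_on) auto
  show ?thesis
    apply (rule finite_measure.integrable_const_bound[OF fm _ assms(1), of B])
    using assms(2) by (auto simp: space_restrict_space)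
qed

lemma int_bound_leb:
  fixes f :: "real \<Rightarrow> real"
  assumes "f \<in> borel_measurable (lebesgue_on {a..b})" "\<And>s. a \<le> s \<Longrightarrow> s \<le> b \<Longrightarrow> \<bar>f s\<bar> \<le> B" "a \<le> b"
  shows "\<bar>integral\<^sup>L (lebesgue_on {a..b}) f\<bar> \<le> B * (b - a)"
proof -
  have i: "integrable (lebesgue_on {a..b}) f" using integrable_bdd[OF assms(1,2)] .
  have "\<bar>integral\<^sup>L (lebesgue_on {a..b}) f\<bar> \<le> integral\<^sup>L (lebesgue_on {a..b}) (\<lambda>s. \<bar>f s\<bar>)"
    using integral_abs_bound by blast
  also have "\<dots> \<le> integral\<^sup>L (lebesgue_on {a..b}) (\<lambda>s. B)"
    apply (rule integral_mono)
    using i apply auto[1]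
    apply (rule integrable_bdd) using assms by (auto simp: space_restrict_space)
  also have "\<dots> = B * (b - a)"
    using assms(3) by (simp add: space_restrict_space measure_restrict_space)
  finally show ?thesis .
qed



lemma min_seq:
  fixes U :: "'f set" and D Nrm :: "'f \<Rightarrow> real" and mid :: "'f \<Rightarrow> 'f \<Rightarrow> 'f" and Q :: "'f \<Rightarrow> 'f \<Rightarrow> real"
  assumes mid: "\<And>a b. a\<in>U \<Longrightarrow> b\<in>U \<Longrightarrow> mid a b \<in> U \<and> D (mid a b) \<le> max (D a) (D b) \<and>
                    Nrm (mid a b) + Q a b = (Nrm a + Nrm b) / 2"
    and bnd: "\<And>a. a \<in> U \<Longrightarrow> 0 \<le> Nrm a \<and> Nrm a \<le> Bd"
    and inf0: "\<And>e. e > 0 \<Longrightarrow> \<exists>a\<in>U. D a \<le> e"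
  shows "\<exists>h. (\<forall>n. h n \<in> U \<and> D (h n) \<le> 1 / Suc n) \<and> (\<forall>e>0. \<exists>N. \<forall>n\<ge>N. \<forall>l\<ge>N. Q (h n) (h l) \<le> e)"
proof -
  define A where "A n = {a\<in>U. D a \<le> 1 / Suc n}" for n
  define d where "d n = Inf (Nrm ` A n)" for n
  have Ane: "A n \<noteq> {}" for n
    using inf0[of "1 / Suc n"] unfolding A_def by auto
  have bb: "bdd_below (Nrm ` A n)" for n
    using bnd unfolding A_def bdd_below_def by auto
  have dle: "d n \<le> Nrm a" if "a \<in> A n" for a n
    unfolding d_def using bb that by (simp add: cInf_lower)
  have Amono: "A (Suc n) \<subseteq> A n" for n
    unfolding A_def by (auto intro: order_trans[OF _ frac_le]) 
  have Amono2: "A l \<subseteq> A n" if "n \<le> l" for n l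
    using that
  proof (induction l)
    case 0 then show ?case by auto
  next
    case (Suc l) then show ?case using Amono[of l] by (cases "n = Suc l") auto
  qed
  have dinc: "incseq d"
  proof (rule incseq_SucI)
    fix n show "d n \<le> d (Suc n)"
      unfolding d_def apply (rule cInf_superset_mono)
      using Ane[of "Suc n"] apply blast
      using bb[of n] apply blast
      using Amono[of n] by (rule image_mono)
  qed
  have dB: "d n \<le> Bd" for n
  proof -
    obtain a where "a \<in> A n" using Ane by blast
    then show ?thesis using dle[of a n] bnd[of a] unfolding A_def by auto
  qed
  obtain L where dL: "d \<longlonglongrightarrow> L" "\<forall>i. d i \<le> L"
    using incseq_convergent[OF dinc, of Bd] dB by blast
  have "\<exists>a. a \<in> A n \<and> Nrm a < d n + 1 / Suc n" for n
  proof -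
    have lt: "Inf (Nrm ` A n) < d n + 1 / Suc n" unfolding d_def by simp
    have "Nrm ` A n \<noteq> {}" using Ane[of n] by auto
    from cInf_lessD[OF this lt] obtain x where "x \<in> Nrm ` A n" "x < d n + 1 / Suc n" by blast
    then show ?thesis by auto
  qed
  then obtain h where h: "\<And>n. h n \<in> A n" "\<And>n. Nrm (h n) < d n + 1 / Suc n"
    by metis
  have Qb: "Q (h n) (h l) \<le> L - d p + 1 / Suc p" if pn: "p \<le> n" and pl: "p \<le> l" for n l p
  proof -
    have hn: "h n \<in> A p" using h(1)[of n] Amono2[OF pn] by auto
    have hl: "h l \<in> A p" using h(1)[of l] Amono2[OF pl] by auto
    have U: "h n \<in> U" "h l \<in> U" using hn hl unfolding A_def by auto
    from mid[OF U] have m: "mid (h n) (h l) \<in> U" "D (mid (h n) (h l)) \<le> max (D (h n)) (D (h l))"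
      "Nrm (mid (h n) (h l)) + Q (h n) (h l) = (Nrm (h n) + Nrm (h l)) / 2" by auto
    have "mid (h n) (h l) \<in> A p" using m(1,2) hn hl unfolding A_def by auto
    then have a1: "d p \<le> Nrm (mid (h n) (h l))" by (rule dle)
    have a2: "1 / real (Suc n) \<le> 1 / Suc p" "1 / real (Suc l) \<le> 1 / Suc p"
      using pn pl by (auto intro!: divide_left_mono)
    have a3: "d n \<le> L" "d l \<le> L" using dL(2) by auto
    define en el ep where "en = 1 / real (Suc n)" and "el = 1 / real (Suc l)" and "ep = 1 / real (Suc p)"
    have "Q (h n) (h l) \<le> L - d p + ep"
      using a1 a2 a3 m(3) h(2)[of n] h(2)[of l]
      unfolding en_def[symmetric] el_def[symmetric] ep_def[symmetric] by argo
    then show ?thesis unfolding ep_def .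
  qed
  have P1: "\<forall>n. h n \<in> U \<and> D (h n) \<le> 1 / Suc n" using h(1) unfolding A_def by auto
  have P2: "\<forall>e>0. \<exists>N. \<forall>n\<ge>N. \<forall>l\<ge>N. Q (h n) (h l) \<le> e"
  proof (intro allI impI)
    fix e :: real assume e: "e > 0"
    have "\<forall>\<^sub>F n in sequentially. dist (d n) L < e / 2"
      using dL(1) half_gt_zero[OF e] unfolding tendsto_iff by blast
    then obtain N1 where N1: "\<And>n. n \<ge> N1 \<Longrightarrow> dist (d n) L < e / 2"
      by (auto simp: eventually_sequentially)
    obtain N2 where N2: "1 / Suc N2 < e / 2"
      using reals_Archimedean e by (metis half_gt_zero inverse_eq_divide of_nat_Suc)
    define N where "N = max N1 N2"
    have i1: "L - d N < e / 2" using N1[of N] dL(2) unfolding N_def by (auto simp: dist_real_def)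
    have i2: "1 / real (Suc N) \<le> 1 / Suc N2" unfolding N_def by (auto intro!: divide_left_mono)
    show "\<exists>N. \<forall>n\<ge>N. \<forall>l\<ge>N. Q (h n) (h l) \<le> e"
    proof (intro exI allI impI)
      fix n l assume nl: "N \<le> n" "N \<le> l"
      have "Q (h n) (h l) \<le> L - d N + 1 / Suc N" using Qb nl by blast
      then show "Q (h n) (h l) \<le> e" using i1 i2 N2 by argo
    qed
  qed
  show ?thesis using P1 P2 by blast
qed


lemma common_subseq:
  fixes s :: "nat \<Rightarrow> nat \<Rightarrow> 'a \<Rightarrow> real"
  assumes fin: "finite I"
    and int: "\<And>n i. i \<in> I \<Longrightarrow> integrable M (s n i)"
    and cau: "\<And>i e. i \<in> I \<Longrightarrow> e > 0 \<Longrightarrow> \<exists>N. \<forall>a\<ge>N. \<forall>b\<ge>N. (LINT x|M. \<bar>s a i x - s b i x\<bar>) < e"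
  shows "\<exists>r. strict_mono r \<and> (\<forall>i\<in>I. AE x in M. Cauchy (\<lambda>n. s (r n) i x))"
  using fin int cau
proof (induction I arbitrary: s rule: finite_induct)
  case empty
  then show ?case by (auto intro: strict_mono_id)
next
  case (insert i0 I)
  obtain r where r: "strict_mono r" "\<forall>i\<in>I. AE x in M. Cauchy (\<lambda>n. s (r n) i x)"
    using insert.IH[of s] insert.prems by blast
  have c0: "\<exists>N. \<forall>a\<ge>N. \<forall>b\<ge>N. (LINT x|M. norm (s (r a) i0 x - s (r b) i0 x)) < e" if "e > 0" for e
  proof -
    have "\<exists>N. \<forall>a\<ge>N. \<forall>b\<ge>N. (LINT x|M. \<bar>s a i0 x - s b i0 x\<bar>) < e"
      using insert.prems(2)[of i0 e] that by auto
    then obtain N where N: "\<forall>a\<ge>N. \<forall>b\<ge>N. (LINT x|M. \<bar>s a i0 x - s b i0 x\<bar>) < e" by blast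
    show ?thesis
      apply (rule exI[of _ N]) using N seq_suble[OF r(1)] by (auto intro: le_trans)
  qed
  obtain r' where r': "strict_mono r'" "AE x in M. Cauchy (\<lambda>n. s (r (r' n)) i0 x)"
    using cauchy_L1_AE_cauchy_subseq[of M "\<lambda>n. s (r n) i0", OF _ c0] insert.prems(1) by auto
  show ?case
  proof (intro exI conjI ballI)
    show "strict_mono (r \<circ> r')" using r(1) r'(1) by (rule strict_mono_o)
    fix i assume "i \<in> insert i0 I"
    then show "AE x in M. Cauchy (\<lambda>n. s ((r \<circ> r') n) i x)"
    proof
      assume "i = i0" then show ?thesis using r'(2) by simp
    next
      assume "i \<in> I"
      then have "AE x in M. Cauchy (\<lambda>n. s (r n) i x)" using r(2) by auto
      then show ?thesis
        by eventually_elim (use Cauchy_subseq_Cauchy[OF _ r'(1)] in \<open>auto simp: o_def\<close>)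
    qed
  qed
qed

lemma abs_le_sq: "\<bar>u::real\<bar> \<le> d + u^2 / d" if "d > 0"
proof -
  have "0 \<le> (\<bar>u\<bar> - d)^2" by simp
  then have "2 * d * \<bar>u\<bar> \<le> u^2 + d^2" by (simp add: power2_eq_square algebra_simps)
  have e: "d + u^2 / d = (u^2 + d^2) / d" using that by (simp add: field_simps power2_eq_square)
  have "2 * \<bar>u\<bar> \<le> (u^2 + d^2) / d" using that \<open>2 * d * \<bar>u\<bar> \<le> u^2 + d^2\<close>
    by (simp add: le_divide_eq mult.commute mult.left_commute)
  then show ?thesis unfolding e by simp
qed




definition Pf :: "(nat \<Rightarrow> real) \<Rightarrow> nat \<Rightarrow> (nat \<Rightarrow> nat \<Rightarrow> real) \<Rightarrow> (nat \<Rightarrow> real) \<Rightarrow> nat \<Rightarrow> (nat \<Rightarrow> real \<Rightarrow> real) \<Rightarrow> real \<Rightarrow> real" where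
  "Pf lam k c z j \<alpha> t = z j + (\<Sum>i=1..k. integral\<^sup>L (lebesgue_on {0..t}) (\<lambda>s. exp (lam j * s) * \<alpha> i s) * c i j)"

lemma sol_coeff_Pf:
  "sol_coeff \<Omega> \<omega> \<xi> lam k \<alpha> y0 j t =
     exp (- lam j * t) * Pf lam k (\<lambda>i j. l2_inner \<Omega> (\<lambda>x. indicator \<omega> x * \<xi> i x) (\<xi> j)) (\<lambda>j. l2_inner \<Omega> y0 (\<xi> j)) j \<alpha> t"
proof -
  have e: "(LINT s:{0..t}|lebesgue. exp (- lam j * (t - s)) * \<alpha> i s) =
        exp (- lam j * t) * integral\<^sup>L (lebesgue_on {0..t}) (\<lambda>s. exp (lam j * s) * \<alpha> i s)" for i
  proof -
    have "(LINT s:{0..t}|lebesgue. exp (- lam j * (t - s)) * \<alpha> i s) =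
        integral\<^sup>L (lebesgue_on {0..t}) (\<lambda>s. exp (- lam j * t) * (exp (lam j * s) * \<alpha> i s))"
      by (subst lint_eq_leb_on) (auto simp: mult_exp_exp algebra_simps)
    then show ?thesis by simp
  qed
  show ?thesis unfolding sol_coeff_def Pf_def e
    by (simp add: algebra_simps sum_distrib_left)
qed

lemma reaches_Pf:
  "reaches \<Omega> \<omega> \<xi> lam m k \<alpha> y0 t \<longleftrightarrow>
    (\<forall>j\<in>{1..m}. Pf lam k (\<lambda>i j. l2_inner \<Omega> (\<lambda>x. indicator \<omega> x * \<xi> i x) (\<xi> j)) (\<lambda>j. l2_inner \<Omega> y0 (\<xi> j)) j \<alpha> t = 0)"
  unfolding reaches_def sol_coeff_Pf by simp



lemma adm_meas: "admissible k abar \<alpha> \<Longrightarrow> i \<in> {1..k} \<Longrightarrow> \<alpha> i \<in> borel_measurable (lebesgue_on {0..})"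
  unfolding admissible_def by auto
lemma adm_bnd: "admissible k abar \<alpha> \<Longrightarrow> i \<in> {1..k} \<Longrightarrow> 0 \<le> s \<Longrightarrow> \<bar>\<alpha> i s\<bar> \<le> abar i"
  unfolding admissible_def by auto

lemma adm_int:
  assumes "admissible k abar \<alpha>" "i \<in> {1..k}" "0 \<le> a"
  shows "integrable (lebesgue_on {a..b}) (\<lambda>s. exp (l * s) * \<alpha> i s)"
proof (rule integrable_bdd[where B = "exp (\<bar>l\<bar> * \<bar>b\<bar>) * abar i"])
  have "\<alpha> i \<in> borel_measurable (lebesgue_on {a..b})"
    using measurable_restrict_mono[OF adm_meas[OF assms(1,2)]] assms(3) by auto
  then show "(\<lambda>s. exp (l * s) * \<alpha> i s) \<in> borel_measurable (lebesgue_on {a..b})" by measurable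
  fix s assume s: "a \<le> s" "s \<le> b"
  have "\<bar>exp (l * s) * \<alpha> i s\<bar> = exp (l * s) * \<bar>\<alpha> i s\<bar>" by (simp add: abs_mult)
  also have "\<dots> \<le> exp (\<bar>l\<bar> * \<bar>b\<bar>) * abar i"
  proof (rule mult_mono)
    have "l * s \<le> \<bar>l\<bar> * s" using s assms(3) by (intro mult_right_mono) auto
    also have "\<dots> \<le> \<bar>l\<bar> * \<bar>b\<bar>" using s assms(3) by (intro mult_left_mono) auto
    finally have "l * s \<le> \<bar>l\<bar> * \<bar>b\<bar>" .
    then show "exp (l * s) \<le> exp (\<bar>l\<bar> * \<bar>b\<bar>)" by simp
    show "\<bar>\<alpha> i s\<bar> \<le> abar i" using adm_bnd[OF assms(1,2)] s assms(3) by auto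
  qed auto
  finally show "\<bar>exp (l * s) * \<alpha> i s\<bar> \<le> exp (\<bar>l\<bar> * \<bar>b\<bar>) * abar i" .
qed

lemma Pf_mid:
  assumes "admissible k abar a" "admissible k abar b" "0 \<le> t"
  shows "Pf lam k c z j (\<lambda>i s. (a i s + b i s) / 2) t = (Pf lam k c z j a t + Pf lam k c z j b t) / 2"
proof -
  have "integral\<^sup>L (lebesgue_on {0..t}) (\<lambda>s. exp (lam j * s) * ((a i s + b i s) / 2)) =
     (integral\<^sup>L (lebesgue_on {0..t}) (\<lambda>s. exp (lam j * s) * a i s) +
      integral\<^sup>L (lebesgue_on {0..t}) (\<lambda>s. exp (lam j * s) * b i s)) / 2" if i: "i \<in> {1..k}" for i
  proof -
    have "integral\<^sup>L (lebesgue_on {0..t}) (\<lambda>s. exp (lam j * s) * ((a i s + b i s) / 2)) =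
       integral\<^sup>L (lebesgue_on {0..t}) (\<lambda>s. (exp (lam j * s) * a i s + exp (lam j * s) * b i s) / 2)"
      by (simp add: algebra_simps)
    also have "\<dots> = integral\<^sup>L (lebesgue_on {0..t}) (\<lambda>s. (exp (lam j * s) * a i s + exp (lam j * s) * b i s)) / 2"
      by simp
    also have "\<dots> = (integral\<^sup>L (lebesgue_on {0..t}) (\<lambda>s. exp (lam j * s) * a i s) +
      integral\<^sup>L (lebesgue_on {0..t}) (\<lambda>s. exp (lam j * s) * b i s)) / 2"
      using adm_int[OF assms(1) i, of 0 t "lam j"] adm_int[OF assms(2) i, of 0 t "lam j"]
      by (simp add: integral_add)
    finally show ?thesis .
  qed
  note I = this
  let ?Im = "\<lambda>i. integral\<^sup>L (lebesgue_on {0..t}) (\<lambda>s. exp (lam j * s) * ((a i s + b i s) / 2))"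
  let ?Ia = "\<lambda>i. integral\<^sup>L (lebesgue_on {0..t}) (\<lambda>s. exp (lam j * s) * a i s)"
  let ?Ib = "\<lambda>i. integral\<^sup>L (lebesgue_on {0..t}) (\<lambda>s. exp (lam j * s) * b i s)"
  have "(\<Sum>i=1..k. ?Im i * c i j) = (\<Sum>i=1..k. (?Ia i * c i j + ?Ib i * c i j) / 2)"
    apply (rule sum.cong[OF refl])
    subgoal for i using I[of i] by (simp add: algebra_simps add_divide_distrib)
    done
  also have "\<dots> = ((\<Sum>i=1..k. ?Ia i * c i j) + (\<Sum>i=1..k. ?Ib i * c i j)) / 2"
    by (simp add: sum_divide_distrib[symmetric] sum.distrib)
  finally show ?thesis unfolding Pf_def by (simp add: field_simps)
qed



lemma adm_meas_t: "admissible k abar \<alpha> \<Longrightarrow> i \<in> {1..k} \<Longrightarrow> 0 \<le> a \<Longrightarrow> \<alpha> i \<in> borel_measurable (lebesgue_on {a..b})"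
  using measurable_restrict_mono[OF adm_meas] by fastforce

lemma Pf_diff:
  assumes adm: "admissible k abar \<alpha>" and t: "0 \<le> t1" "t1 \<le> t2"
  shows "\<bar>Pf lam k c z j \<alpha> t2 - Pf lam k c z j \<alpha> t1\<bar> \<le> (\<Sum>i=1..k. \<bar>c i j\<bar> * (exp (\<bar>lam j\<bar> * t2) * abar i)) * (t2 - t1)"
proof -
  let ?I = "\<lambda>i t. integral\<^sup>L (lebesgue_on {0..t}) (\<lambda>s. exp (lam j * s) * \<alpha> i s)"
  have d: "\<bar>?I i t2 - ?I i t1\<bar> \<le> exp (\<bar>lam j\<bar> * t2) * abar i * (t2 - t1)" if i: "i \<in> {1..k}" for i
  proof -
    have "?I i t2 = ?I i t1 + integral\<^sup>L (lebesgue_on {t1..t2}) (\<lambda>s. exp (lam j * s) * \<alpha> i s)"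
      using Equivalence_Measurable_On_Borel.integral_combine[OF adm_int[OF adm i, of 0 t2 "lam j"]] t by auto
    moreover have "\<bar>integral\<^sup>L (lebesgue_on {t1..t2}) (\<lambda>s. exp (lam j * s) * \<alpha> i s)\<bar> \<le> exp (\<bar>lam j\<bar> * t2) * abar i * (t2 - t1)"
    proof (rule int_bound_leb)
      show "(\<lambda>s. exp (lam j * s) * \<alpha> i s) \<in> borel_measurable (lebesgue_on {t1..t2})"
        using adm_meas_t[OF adm i t(1)] by measurable
      fix s assume s: "t1 \<le> s" "s \<le> t2"
      have "\<bar>exp (lam j * s) * \<alpha> i s\<bar> = exp (lam j * s) * \<bar>\<alpha> i s\<bar>" by (simp add: abs_mult)
      also have "\<dots> \<le> exp (\<bar>lam j\<bar> * t2) * abar i"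
      proof (rule mult_mono)
        have "lam j * s \<le> \<bar>lam j\<bar> * s" using s t by (intro mult_right_mono) auto
        also have "\<dots> \<le> \<bar>lam j\<bar> * t2" using s t by (intro mult_left_mono) auto
        finally have "lam j * s \<le> \<bar>lam j\<bar> * t2" .
        then show "exp (lam j * s) \<le> exp (\<bar>lam j\<bar> * t2)" by simp
        show "\<bar>\<alpha> i s\<bar> \<le> abar i" using adm_bnd[OF adm i] s t by auto
      qed auto
      finally show "\<bar>exp (lam j * s) * \<alpha> i s\<bar> \<le> exp (\<bar>lam j\<bar> * t2) * abar i" .
    qed (use t in auto)
    ultimately show ?thesis by simp
  qed
  have eq: "Pf lam k c z j \<alpha> t2 - Pf lam k c z j \<alpha> t1 = (\<Sum>i=1..k. (?I i t2 - ?I i t1) * c i j)"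
    unfolding Pf_def by (simp add: sum_subtractf[symmetric] algebra_simps)
  have "\<bar>Pf lam k c z j \<alpha> t2 - Pf lam k c z j \<alpha> t1\<bar> = \<bar>\<Sum>i=1..k. (?I i t2 - ?I i t1) * c i j\<bar>"
    by (simp only: eq)
  also have "\<dots> \<le> (\<Sum>i=1..k. \<bar>(?I i t2 - ?I i t1) * c i j\<bar>)" by (rule sum_abs)
  also have "\<dots> \<le> (\<Sum>i=1..k. \<bar>c i j\<bar> * (exp (\<bar>lam j\<bar> * t2) * abar i) * (t2 - t1))"
  proof (rule sum_mono)
    fix i assume i: "i \<in> {1..k}"
    show "\<bar>(?I i t2 - ?I i t1) * c i j\<bar> \<le> \<bar>c i j\<bar> * (exp (\<bar>lam j\<bar> * t2) * abar i) * (t2 - t1)"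
    proof -
      have "\<bar>(?I i t2 - ?I i t1) * c i j\<bar> = \<bar>c i j\<bar> * \<bar>?I i t2 - ?I i t1\<bar>" by (simp add: abs_mult)
      also have "\<dots> \<le> \<bar>c i j\<bar> * (exp (\<bar>lam j\<bar> * t2) * abar i * (t2 - t1))"
        by (rule mult_left_mono[OF d[OF i]]) simp
      finally show ?thesis by (simp add: mult.assoc)
    qed
  qed
  also have "\<dots> = (\<Sum>i=1..k. \<bar>c i j\<bar> * (exp (\<bar>lam j\<bar> * t2) * abar i)) * (t2 - t1)"
    by (simp add: sum_distrib_right)
  finally show ?thesis .
qed



lemma sq_bound: assumes "\<bar>x\<bar> \<le> B" shows "\<bar>x^2\<bar> \<le> (B::real)^2"
proof -
  have "\<bar>x^2\<bar> = \<bar>x\<bar>^2" by (simp add: power_abs)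
  also have "\<dots> \<le> B^2" by (rule power_mono[OF assms]) simp
  finally show ?thesis .
qed

lemma adm_sq_int:
  assumes "admissible k abar a" "admissible k abar b" "i \<in> {1..k}" "0 \<le> t"
  shows "integrable (lebesgue_on {0..t}) (\<lambda>s. ((a i s + b i s) / 2)^2)"
    and "integrable (lebesgue_on {0..t}) (\<lambda>s. ((a i s - b i s) / 2)^2)"
    and "integrable (lebesgue_on {0..t}) (\<lambda>s. (a i s)^2)"
    and "integrable (lebesgue_on {0..t}) (\<lambda>s. \<bar>a i s - b i s\<bar>)"
    and "integrable (lebesgue_on {0..t}) (\<lambda>s. a i s)"
proof -
  have ma: "a i \<in> borel_measurable (lebesgue_on {0..t})" using adm_meas_t[OF assms(1,3)] by auto
  have mb: "b i \<in> borel_measurable (lebesgue_on {0..t})" using adm_meas_t[OF assms(2,3)] by auto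
  have ba: "\<bar>a i s\<bar> \<le> abar i" "\<bar>b i s\<bar> \<le> abar i" if "0 \<le> s" for s
    using adm_bnd[OF assms(1,3) that] adm_bnd[OF assms(2,3) that] by auto
  show "integrable (lebesgue_on {0..t}) (\<lambda>s. ((a i s + b i s) / 2)^2)"
  proof (rule integrable_bdd[where B = "(abar i)^2"])
    show "(\<lambda>s. ((a i s + b i s) / 2)^2) \<in> borel_measurable (lebesgue_on {0..t})" using ma mb by (intro borel_measurable_power borel_measurable_divide borel_measurable_add borel_measurable_diff borel_measurable_abs borel_measurable_const)
    fix s :: real assume s: "0 \<le> s" "s \<le> t"
    have "\<bar>(a i s + b i s) / 2\<bar> \<le> abar i" using ba[OF s(1)] by auto
    then show "\<bar>((a i s + b i s) / 2)^2\<bar> \<le> (abar i)^2" by (rule sq_bound)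
  qed
  show "integrable (lebesgue_on {0..t}) (\<lambda>s. ((a i s - b i s) / 2)^2)"
  proof (rule integrable_bdd[where B = "(abar i)^2"])
    show "(\<lambda>s. ((a i s - b i s) / 2)^2) \<in> borel_measurable (lebesgue_on {0..t})" using ma mb by (intro borel_measurable_power borel_measurable_divide borel_measurable_add borel_measurable_diff borel_measurable_abs borel_measurable_const)
    fix s :: real assume s: "0 \<le> s" "s \<le> t"
    have "\<bar>(a i s - b i s) / 2\<bar> \<le> abar i" using ba[OF s(1)] by auto
    then show "\<bar>((a i s - b i s) / 2)^2\<bar> \<le> (abar i)^2" by (rule sq_bound)
  qed
  show "integrable (lebesgue_on {0..t}) (\<lambda>s. (a i s)^2)"
  proof (rule integrable_bdd[where B = "(abar i)^2"])
    show "(\<lambda>s. (a i s)^2) \<in> borel_measurable (lebesgue_on {0..t})" using ma by (intro borel_measurable_power)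
    fix s :: real assume s: "0 \<le> s" "s \<le> t"
    show "\<bar>(a i s)^2\<bar> \<le> (abar i)^2" using ba[OF s(1)] by (intro sq_bound) auto
  qed
  show "integrable (lebesgue_on {0..t}) (\<lambda>s. \<bar>a i s - b i s\<bar>)"
  proof (rule integrable_bdd[where B = "2 * abar i"])
    show "(\<lambda>s. \<bar>a i s - b i s\<bar>) \<in> borel_measurable (lebesgue_on {0..t})" using ma mb by (intro borel_measurable_power borel_measurable_divide borel_measurable_add borel_measurable_diff borel_measurable_abs borel_measurable_const)
    fix s :: real assume s: "0 \<le> s" "s \<le> t"
    show "\<bar>\<bar>a i s - b i s\<bar>\<bar> \<le> 2 * abar i" using ba[OF s(1)] by auto
  qed
  show "integrable (lebesgue_on {0..t}) (\<lambda>s. a i s)"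
    by (rule integrable_bdd[where B = "abar i"]) (use ma ba in auto)
qed



lemma attain:
  fixes lam :: "nat \<Rightarrow> real" and c :: "nat \<Rightarrow> nat \<Rightarrow> real" and z :: "nat \<Rightarrow> real" and abar :: "nat \<Rightarrow> real"
  assumes abar: "\<forall>i\<in>{1..k}. abar i > 0"
    and Ts_def: "Ts = {t. t \<ge> 0 \<and> (\<exists>\<alpha>. admissible k abar \<alpha> \<and> (\<forall>j\<in>{1..m}. Pf lam k c z j \<alpha> t = 0))}"
    and ne: "Ts \<noteq> {}"
  shows "\<exists>\<alpha>. admissible k abar \<alpha> \<and> (\<forall>j\<in>{1..m}. Pf lam k c z j \<alpha> (Inf Ts) = 0)"
proof -
  define ts where "ts = Inf Ts"
  have bb: "bdd_below Ts" unfolding Ts_def bdd_below_def by auto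
  have ts0: "0 \<le> ts" unfolding ts_def using ne by (intro cInf_greatest) (auto simp: Ts_def)
  define D where "D \<alpha> = (\<Sum>j=1..m. \<bar>Pf lam k c z j \<alpha> ts\<bar>)" for \<alpha>
  define M where "M = lebesgue_on {0..ts}"
  define Nrm where "Nrm \<alpha> = (\<Sum>i=1..k. integral\<^sup>L M (\<lambda>s. (\<alpha> i s)^2))" for \<alpha> :: "nat \<Rightarrow> real \<Rightarrow> real"
  define Q where "Q a b = (\<Sum>i=1..k. integral\<^sup>L M (\<lambda>s. ((a i s - b i s) / 2)^2))" for a b :: "nat \<Rightarrow> real \<Rightarrow> real"
  define mid where "mid a b = (\<lambda>i s. (a i s + b i s) / 2)" for a b :: "nat \<Rightarrow> real \<Rightarrow> real"
  define U where "U = {\<alpha>. admissible k abar \<alpha>}"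
  have inf0: "\<exists>a\<in>U. D a \<le> e" if e: "e > 0" for e
  proof -
    define C where "C = (\<Sum>j=1..m. \<Sum>i=1..k. \<bar>c i j\<bar> * (exp (\<bar>lam j\<bar> * (ts + 1)) * abar i))"
    have C0: "0 \<le> C" unfolding C_def using abar by (intro sum_nonneg mult_nonneg_nonneg) (auto simp: less_imp_le)
    define \<delta> where "\<delta> = min 1 (e / (C + 1))"
    have \<delta>0: "0 < \<delta>" unfolding \<delta>_def using e C0 by auto
    have "Inf Ts < ts + \<delta>" unfolding ts_def using \<delta>0 by simp
    from cInf_lessD[OF ne this] obtain t where t: "t \<in> Ts" "t < ts + \<delta>" by blast
    have tts: "ts \<le> t" unfolding ts_def using bb t(1) by (rule cInf_lower[rotated])
    from t(1) obtain \<alpha> where adm: "admissible k abar \<alpha>" and reach: "\<forall>j\<in>{1..m}. Pf lam k c z j \<alpha> t = 0"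
      unfolding Ts_def by auto
    have "D \<alpha> \<le> C * (t - ts)"
    proof -
      have "D \<alpha> = (\<Sum>j=1..m. \<bar>Pf lam k c z j \<alpha> t - Pf lam k c z j \<alpha> ts\<bar>)"
        unfolding D_def using reach by (intro sum.cong) auto
      also have "\<dots> \<le> (\<Sum>j=1..m. (\<Sum>i=1..k. \<bar>c i j\<bar> * (exp (\<bar>lam j\<bar> * t) * abar i)) * (t - ts))"
        by (intro sum_mono Pf_diff[OF adm ts0 tts])
      also have "\<dots> \<le> (\<Sum>j=1..m. (\<Sum>i=1..k. \<bar>c i j\<bar> * (exp (\<bar>lam j\<bar> * (ts + 1)) * abar i)) * (t - ts))"
      proof (intro sum_mono mult_right_mono)
        fix j i assume i: "i \<in> {1..k}"
        have "\<bar>lam j\<bar> * t \<le> \<bar>lam j\<bar> * (ts + 1)" using t(2) \<delta>_def by (intro mult_left_mono) auto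
        then show "\<bar>c i j\<bar> * (exp (\<bar>lam j\<bar> * t) * abar i) \<le> \<bar>c i j\<bar> * (exp (\<bar>lam j\<bar> * (ts + 1)) * abar i)"
          using abar i by (intro mult_left_mono mult_right_mono) (auto simp: less_imp_le)
      qed (use tts in auto)
      also have "\<dots> = C * (t - ts)" unfolding C_def by (simp add: sum_distrib_right)
      finally show ?thesis .
    qed
    also have "\<dots> \<le> C * \<delta>" using t(2) C0 by (intro mult_left_mono) auto
    also have "\<dots> \<le> C * (e / (C + 1))" using C0 unfolding \<delta>_def by (intro mult_left_mono) auto
    also have "\<dots> \<le> e" using C0 e by (simp add: field_simps)
    finally show ?thesis using adm unfolding U_def by auto
  qed
  have Ums: "mid a b \<in> U \<and> D (mid a b) \<le> max (D a) (D b) \<and> Nrm (mid a b) + Q a b = (Nrm a + Nrm b) / 2"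
    if a: "a \<in> U" and b: "b \<in> U" for a b
  proof (intro conjI)
    have aa: "admissible k abar a" and ab: "admissible k abar b" using a b unfolding U_def by auto
    show "mid a b \<in> U" unfolding U_def mid_def admissible_def
    proof (intro CollectI ballI conjI allI impI)
      fix i assume i: "i \<in> {1..k}"
      show "(\<lambda>s. (a i s + b i s) / 2) \<in> borel_measurable (lebesgue_on {0..})"
        using adm_meas[OF aa i] adm_meas[OF ab i] by (intro borel_measurable_divide borel_measurable_add borel_measurable_const)
      fix s :: real assume "0 \<le> s"
      then show "\<bar>(a i s + b i s) / 2\<bar> \<le> abar i" using adm_bnd[OF aa i] adm_bnd[OF ab i] by fastforce
    qed
    have "D (mid a b) = (\<Sum>j=1..m. \<bar>(Pf lam k c z j a ts + Pf lam k c z j b ts) / 2\<bar>)"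
      unfolding D_def mid_def by (simp only: Pf_mid[OF aa ab ts0])
    also have "\<dots> \<le> (\<Sum>j=1..m. (\<bar>Pf lam k c z j a ts\<bar> + \<bar>Pf lam k c z j b ts\<bar>) / 2)"
      by (intro sum_mono) auto
    also have "\<dots> = (D a + D b) / 2" unfolding D_def by (simp add: sum.distrib sum_divide_distrib[symmetric])
    also have "\<dots> \<le> max (D a) (D b)" by simp
    finally show "D (mid a b) \<le> max (D a) (D b)" .
    have "integral\<^sup>L M (\<lambda>s. ((a i s + b i s) / 2)^2) + integral\<^sup>L M (\<lambda>s. ((a i s - b i s) / 2)^2)
        = (integral\<^sup>L M (\<lambda>s. (a i s)^2) + integral\<^sup>L M (\<lambda>s. (b i s)^2)) / 2" if i: "i \<in> {1..k}" for i
    proof -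
      have "integral\<^sup>L M (\<lambda>s. ((a i s + b i s) / 2)^2) + integral\<^sup>L M (\<lambda>s. ((a i s - b i s) / 2)^2)
          = integral\<^sup>L M (\<lambda>s. ((a i s + b i s) / 2)^2 + ((a i s - b i s) / 2)^2)"
        unfolding M_def using adm_sq_int(1,2)[OF aa ab i ts0] by (simp add: integral_add)
      also have "\<dots> = integral\<^sup>L M (\<lambda>s. ((a i s)^2 + (b i s)^2) / 2)"
        by (rule Bochner_Integration.integral_cong) (auto simp: power2_eq_square field_simps)
      also have "\<dots> = (integral\<^sup>L M (\<lambda>s. (a i s)^2) + integral\<^sup>L M (\<lambda>s. (b i s)^2)) / 2"
        unfolding M_def using adm_sq_int(3)[OF aa ab i ts0] adm_sq_int(3)[OF ab aa i ts0]
        by (simp add: integral_add)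
      finally show ?thesis .
    qed
    note I = this
    have "Nrm (mid a b) + Q a b = (\<Sum>i=1..k. integral\<^sup>L M (\<lambda>s. ((a i s + b i s) / 2)^2) + integral\<^sup>L M (\<lambda>s. ((a i s - b i s) / 2)^2))"
      unfolding Nrm_def Q_def mid_def by (simp add: sum.distrib)
    also have "\<dots> = (\<Sum>i=1..k. (integral\<^sup>L M (\<lambda>s. (a i s)^2) + integral\<^sup>L M (\<lambda>s. (b i s)^2)) / 2)"
      by (rule sum.cong[OF refl]) (rule I)
    also have "\<dots> = (Nrm a + Nrm b) / 2"
      unfolding Nrm_def by (simp add: sum.distrib sum_divide_distrib[symmetric])
    finally show "Nrm (mid a b) + Q a b = (Nrm a + Nrm b) / 2" .
  qed
  have Ubnd: "0 \<le> Nrm a \<and> Nrm a \<le> (\<Sum>i=1..k. (abar i)^2 * ts)" if a: "a \<in> U" for a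
  proof
    have aa: "admissible k abar a" using a unfolding U_def by auto
    show "0 \<le> Nrm a" unfolding Nrm_def by (intro sum_nonneg integral_nonneg_AE) auto
    show "Nrm a \<le> (\<Sum>i=1..k. (abar i)^2 * ts)" unfolding Nrm_def
    proof (intro sum_mono)
      fix i assume i: "i \<in> {1..k}"
      have "\<bar>integral\<^sup>L M (\<lambda>s. (a i s)^2)\<bar> \<le> (abar i)^2 * (ts - 0)" unfolding M_def
      proof (rule int_bound_leb)
        show "(\<lambda>s. (a i s)^2) \<in> borel_measurable (lebesgue_on {0..ts})"
          using adm_meas_t[OF aa i, where a=0 and b=ts] by (intro borel_measurable_power) auto
        fix s :: real assume "0 \<le> s" "s \<le> ts"
        then show "\<bar>(a i s)^2\<bar> \<le> (abar i)^2" using adm_bnd[OF aa i] by (intro sq_bound) auto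
      qed (use ts0 in auto)
      then show "integral\<^sup>L M (\<lambda>s. (a i s)^2) \<le> (abar i)^2 * ts" by simp
    qed
  qed
  obtain h where h: "\<And>n. h n \<in> U" "\<And>n. D (h n) \<le> 1 / Suc n"
    and hQ: "\<And>e. e > 0 \<Longrightarrow> \<exists>N. \<forall>n\<ge>N. \<forall>l\<ge>N. Q (h n) (h l) \<le> e"
    using min_seq[of U mid D Nrm Q, OF Ums Ubnd inf0] by blast
  have hadm: "admissible k abar (h n)" for n using h(1) unfolding U_def by auto
  have fmM: "finite_measure M" unfolding M_def by (rule finite_measure_lebesgue_on) auto
  have intconst: "integrable M (\<lambda>s. C)" for C :: real
    unfolding M_def by (rule integrable_bdd[where B = "\<bar>C\<bar>"]) auto
  have measM: "measure M (space M) = ts"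
    unfolding M_def using ts0 by (simp add: space_restrict_space measure_restrict_space)
  have lintconst: "integral\<^sup>L M (\<lambda>s. C) = C * ts" for C :: real
    using measM by simp
  have L1c: "\<exists>N. \<forall>a\<ge>N. \<forall>b\<ge>N. (LINT x|M. \<bar>h a i x - h b i x\<bar>) < e" if i: "i \<in> {1..k}" and e: "e > 0" for i e
  proof -
    define \<delta> where "\<delta> = e / (2 * (ts + 1))"
    have \<delta>0: "\<delta> > 0" unfolding \<delta>_def using e ts0 by auto
    have dts: "\<delta> * ts < e / 2" unfolding \<delta>_def using e ts0 by (simp add: field_simps)
    obtain N where N: "\<forall>n\<ge>N. \<forall>l\<ge>N. Q (h n) (h l) \<le> e * \<delta> / 8"
      using hQ[of "e * \<delta> / 8"] e \<delta>0 by auto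
    show ?thesis
    proof (intro exI allI impI)
      fix a b assume ab: "N \<le> a" "N \<le> b"
      let ?u = "\<lambda>s. (h a i s - h b i s) / 2"
      have iu: "integrable M (\<lambda>s. (?u s)^2)" unfolding M_def by (rule adm_sq_int(2)[OF hadm hadm i ts0])
      have "(LINT x|M. \<bar>h a i x - h b i x\<bar>) \<le> (LINT x|M. \<delta> + 4 * (?u x)^2 / \<delta>)"
      proof (rule integral_mono)
        show "integrable M (\<lambda>x. \<bar>h a i x - h b i x\<bar>)" unfolding M_def by (rule adm_sq_int(4)[OF hadm hadm i ts0])
        show "integrable M (\<lambda>x. \<delta> + 4 * (?u x)^2 / \<delta>)"
          using intconst iu by (intro Bochner_Integration.integrable_add integrable_divide integrable_mult_right) auto
        fix x
        have "\<bar>h a i x - h b i x\<bar> \<le> \<delta> + (h a i x - h b i x)^2 / \<delta>" by (rule abs_le_sq[OF \<delta>0])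
        also have "(h a i x - h b i x)^2 = 4 * (?u x)^2" by (simp add: power2_eq_square field_simps)
        finally show "\<bar>h a i x - h b i x\<bar> \<le> \<delta> + 4 * (?u x)^2 / \<delta>" .
      qed
      also have "\<dots> = \<delta> * ts + 4 * (LINT x|M. (?u x)^2) / \<delta>"
        using intconst iu by (simp add: Bochner_Integration.integral_add measM)
      also have "(LINT x|M. (?u x)^2) \<le> Q (h a) (h b)"
        unfolding Q_def by (rule member_le_sum[OF i]) (auto intro: integral_nonneg_AE)
      then have "4 * (LINT x|M. (?u x)^2) / \<delta> \<le> 4 * (e * \<delta> / 8) / \<delta>"
        using N ab \<delta>0 by (intro divide_right_mono mult_left_mono) fastforce+
      also have "4 * (e * \<delta> / 8) / \<delta> = e / 2" using \<delta>0 by simp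
      finally show "(LINT x|M. \<bar>h a i x - h b i x\<bar>) < e" using dts by linarith
    qed
  qed
  have hint: "integrable M (h n i)" if "i \<in> {1..k}" for n i
    unfolding M_def using adm_sq_int(5)[OF hadm hadm that ts0] .
  obtain r where r: "strict_mono r" "\<forall>i\<in>{1..k}. AE x in M. Cauchy (\<lambda>n. h (r n) i x)"
    using common_subseq[of "{1..k}" M "\<lambda>n i x. h n i x"] hint L1c by auto
  define \<alpha>s where "\<alpha>s i s = max (- abar i) (min (abar i) (lim (\<lambda>n. h (r n) i s)))" for i s
  have adm: "admissible k abar \<alpha>s" unfolding admissible_def
  proof (intro ballI conjI allI impI)
    fix i assume i: "i \<in> {1..k}"
    have "(\<lambda>s. lim (\<lambda>n. h (r n) i s)) \<in> borel_measurable (lebesgue_on {0..})"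
      by (rule borel_measurable_lim_metric[of "\<lambda>n. h (r n) i"]) (rule adm_meas[OF hadm i])
    then show "\<alpha>s i \<in> borel_measurable (lebesgue_on {0..})"
      unfolding \<alpha>s_def by (intro borel_measurable_max borel_measurable_min borel_measurable_const) auto
    fix s :: real assume "0 \<le> s"
    have "0 < abar i" using abar i by auto
    then show "\<bar>\<alpha>s i s\<bar> \<le> abar i" unfolding \<alpha>s_def abs_le_iff max_def min_def by auto
  qed
  have conv: "AE x in M. (\<lambda>n. h (r n) i x) \<longlonglongrightarrow> \<alpha>s i x" if i: "i \<in> {1..k}" for i
  proof -
    have "AE x in M. Cauchy (\<lambda>n. h (r n) i x)" using r(2) i by auto
    moreover have "AE x in M. x \<in> space M" by (rule AE_space)
    ultimately show ?thesis
    proof eventually_elim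
      case (elim x)
      then have x: "0 \<le> x" unfolding M_def by (auto simp: space_restrict_space)
      have lim: "(\<lambda>n. h (r n) i x) \<longlonglongrightarrow> lim (\<lambda>n. h (r n) i x)"
        using elim(1) by (simp add: Cauchy_convergent_iff convergent_LIMSEQ_iff)
      have bd: "\<bar>h (r n) i x\<bar> \<le> abar i" for n using adm_bnd[OF hadm i x] .
      have b1: "\<forall>n. - abar i \<le> h (r n) i x" and b2: "\<forall>n. h (r n) i x \<le> abar i"
        using bd by (auto simp: abs_le_iff) (metis abs_le_D2 minus_le_iff)
      have "- abar i \<le> lim (\<lambda>n. h (r n) i x)"
        by (rule LIMSEQ_le_const[OF lim]) (use b1 in blast)
      moreover have "lim (\<lambda>n. h (r n) i x) \<le> abar i"
        by (rule LIMSEQ_le_const2[OF lim]) (use b2 in blast)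
      ultimately have "\<alpha>s i x = lim (\<lambda>n. h (r n) i x)" unfolding \<alpha>s_def by auto
      then show ?case using lim by simp
    qed
  qed
  have dct: "(\<lambda>n. integral\<^sup>L M (\<lambda>s. exp (lam j * s) * h (r n) i s)) \<longlonglongrightarrow> integral\<^sup>L M (\<lambda>s. exp (lam j * s) * \<alpha>s i s)"
    if i: "i \<in> {1..k}" for i j
  proof (rule integral_dominated_convergence[where w = "\<lambda>s. exp (\<bar>lam j\<bar> * ts) * abar i"])
    show "(\<lambda>s. exp (lam j * s) * \<alpha>s i s) \<in> borel_measurable M"
      unfolding M_def using adm_meas_t[OF adm i, where a=0 and b=ts] by measurable
    show "(\<lambda>s. exp (lam j * s) * h (r n) i s) \<in> borel_measurable M" for n
      unfolding M_def using adm_meas_t[OF hadm i, where a=0 and b=ts] by measurable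
    show "integrable M (\<lambda>s. exp (\<bar>lam j\<bar> * ts) * abar i)" by (rule intconst)
    show "AE x in M. (\<lambda>n. exp (lam j * x) * h (r n) i x) \<longlonglongrightarrow> exp (lam j * x) * \<alpha>s i x"
      using conv[OF i] by eventually_elim (auto intro: tendsto_mult_left)
    show "AE x in M. norm (exp (lam j * x) * h (r n) i x) \<le> exp (\<bar>lam j\<bar> * ts) * abar i" for n
    proof -
      have "AE x in M. x \<in> space M" by (rule AE_space)
      then show ?thesis
      proof eventually_elim
        case (elim x)
        then have x: "0 \<le> x" "x \<le> ts" unfolding M_def by (auto simp: space_restrict_space)
        have "lam j * x \<le> \<bar>lam j\<bar> * x" using x by (intro mult_right_mono) auto
        also have "\<dots> \<le> \<bar>lam j\<bar> * ts" using x by (intro mult_left_mono) auto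
        finally have "exp (lam j * x) \<le> exp (\<bar>lam j\<bar> * ts)" by simp
        then show ?case using adm_bnd[OF hadm i x(1)]
          by (simp add: abs_mult) (intro mult_mono, auto)
      qed
    qed
  qed
  have Pconv: "(\<lambda>n. Pf lam k c z j (h (r n)) ts) \<longlonglongrightarrow> Pf lam k c z j \<alpha>s ts" for j
    unfolding Pf_def M_def[symmetric]
    by (intro tendsto_add tendsto_const tendsto_sum tendsto_mult_right dct) auto
  have Dconv: "(\<lambda>n. D (h (r n))) \<longlonglongrightarrow> D \<alpha>s"
    unfolding D_def by (intro tendsto_sum tendsto_rabs Pconv)
  have D0: "(\<lambda>n. D (h (r n))) \<longlonglongrightarrow> 0"
  proof (rule tendsto_sandwich[where f = "\<lambda>n. 0" and h = "\<lambda>n. 1 / Suc n"])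
    show "\<forall>\<^sub>F n in sequentially. 0 \<le> D (h (r n))" unfolding D_def by (auto intro: sum_nonneg)
    show "\<forall>\<^sub>F n in sequentially. D (h (r n)) \<le> 1 / Suc n"
    proof (intro always_eventually allI)
      fix n
      have "D (h (r n)) \<le> 1 / Suc (r n)" by (rule h(2))
      also have "\<dots> \<le> 1 / Suc n" using seq_suble[OF r(1), of n] by (intro divide_left_mono) auto
      finally show "D (h (r n)) \<le> 1 / Suc n" .
    qed
    show "(\<lambda>n. 0) \<longlonglongrightarrow> (0::real)" by simp
    show "(\<lambda>n. 1 / real (Suc n)) \<longlonglongrightarrow> 0" by (rule LIMSEQ_Suc[OF lim_const_over_n])
  qed
  have "D \<alpha>s = 0" using LIMSEQ_unique[OF Dconv D0] .
  then have "\<forall>j\<in>{1..m}. Pf lam k c z j \<alpha>s ts = 0"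
    unfolding D_def by (subst (asm) sum_nonneg_eq_0_iff) auto
  then show ?thesis using adm unfolding ts_def by auto
qed



lemma sum_shift1: "(\<Sum>l\<in>{Suc 0..m}. f l) = (\<Sum>a\<in>{0..<m}. f (Suc a))"
  by (induct m) (auto simp: atLeastAtMostSuc_conv add.commute)

lemma solve_lin:
  fixes G :: "nat \<Rightarrow> nat \<Rightarrow> real"
  assumes inj: "\<And>v. (\<forall>j\<in>{1..m}. (\<Sum>l=1..m. G j l * v l) = 0) \<Longrightarrow> \<forall>l\<in>{1..m}. v l = 0"
  shows "\<exists>B. \<forall>w. \<forall>j\<in>{1..m}. (\<Sum>l=1..m. G j l * (\<Sum>p=1..m. B l p * w p)) = w j"
proof -
  define A where "A = mat m m (\<lambda>(a, b). G (Suc a) (Suc b))"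
  have A: "A \<in> carrier_mat m m" unfolding A_def by simp
  have Av: "(A *\<^sub>v v) $ a = (\<Sum>l=1..m. G (Suc a) l * v $ (l - 1))" if "a < m" "v \<in> carrier_vec m" for a v
    using that unfolding A_def by (simp add: scalar_prod_def sum_shift1)
  have "det A \<noteq> 0"
  proof
    assume "det A = 0"
    then obtain v where v: "v \<in> carrier_vec m" "v \<noteq> 0\<^sub>v m" "A *\<^sub>v v = 0\<^sub>v m"
      using det_0_iff_vec_prod_zero_field[OF A] by blast
    have "\<forall>j\<in>{1..m}. (\<Sum>l=1..m. G j l * v $ (l - 1)) = 0"
    proof
      fix j assume j: "j \<in> {1..m}"
      have "(A *\<^sub>v v) $ (j - 1) = 0" using v(3) j by auto
      then show "(\<Sum>l=1..m. G j l * v $ (l - 1)) = 0" using Av[of "j - 1" v] v(1) j by auto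
    qed
    from inj[OF this] have "v = 0\<^sub>v m"
      using v(1) by (intro eq_vecI) (auto, metis One_nat_def Suc_leI atLeastAtMost_iff diff_Suc_1 le_add1 plus_1_eq_Suc le_simps(3))
    with v(2) show False by simp
  qed
  from det_non_zero_imp_unit[OF A this, of "()"]
  obtain B where B: "B \<in> carrier_mat m m" "A * B = 1\<^sub>m m"
    unfolding Units_def ring_mat_def by auto
  show ?thesis
  proof (intro exI allI ballI)
    fix w :: "nat \<Rightarrow> real" and j assume j: "j \<in> {1..m}"
    define wv where "wv = vec m (\<lambda>a. w (Suc a))"
    have wv: "wv \<in> carrier_vec m" unfolding wv_def by simp
    have Bw: "(\<Sum>p=1..m. B $$ (l - 1, p - 1) * w p) = (B *\<^sub>v wv) $ (l - 1)" if "l \<in> {1..m}" for l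
    proof -
      have lm: "l - 1 < dim_row B" "dim_col B = m" using that B(1) by auto
      show ?thesis unfolding wv_def using lm by (simp add: scalar_prod_def sum_shift1)
    qed
    have "(\<Sum>l=1..m. G j l * (\<Sum>p=1..m. B $$ (l - 1, p - 1) * w p)) = (\<Sum>l=1..m. G j l * (B *\<^sub>v wv) $ (l - 1))"
      apply (rule sum.cong[OF refl])
      subgoal for l using Bw[of l] by simp
      done
    also have "\<dots> = (A *\<^sub>v (B *\<^sub>v wv)) $ (j - 1)"
      using Av[of "j - 1" "B *\<^sub>v wv"] j mult_mat_vec_carrier[OF B(1) wv] by auto
    also have "A *\<^sub>v (B *\<^sub>v wv) = (A * B) *\<^sub>v wv"
      using A B(1) wv by (simp add: assoc_mult_mat_vec)
    also have "\<dots> = wv" using B(2) wv by simp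
    finally show "(\<Sum>l=1..m. G j l * (\<Sum>p=1..m. B $$ (l - 1, p - 1) * w p)) = w j"
      using j unfolding wv_def by auto
  qed
qed



lemma exp_hasint:
  fixes \<mu> a b :: real
  assumes "a \<le> b" "\<mu> \<noteq> 0"
  shows "((\<lambda>u. exp (\<mu> * (u - a))) has_integral (exp (\<mu> * (b - a)) - 1) / \<mu>) {a..b}"
proof -
  have d: "((\<lambda>u. exp (\<mu> * (u - a)) / \<mu>) has_vector_derivative exp (\<mu> * (u - a))) (at u within {a..b})" for u
  proof -
    have "((\<lambda>u. exp (\<mu> * (u - a)) / \<mu>) has_real_derivative exp (\<mu> * (u - a))) (at u within {a..b})"
      using assms(2) by (auto intro!: derivative_eq_intros)
    then show ?thesis by (simp add: has_real_derivative_iff_has_vector_derivative)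
  qed
  have "((\<lambda>u. exp (\<mu> * (u - a))) has_integral (exp (\<mu> * (b - a)) / \<mu> - exp (\<mu> * (a - a)) / \<mu>)) {a..b}"
    by (rule fundamental_theorem_of_calculus[OF assms(1)]) (use d in auto)
  then show ?thesis by (simp add: diff_divide_distrib)
qed

lemma lin_indep:
  fixes lm v :: "nat \<Rightarrow> real"
  assumes "finite J" "inj_on lm J" "\<forall>u\<in>{0<..<1}. (\<Sum>l\<in>J. v l * exp (lm l * u)) = 0"
  shows "\<forall>l\<in>J. v l = 0"
  using assms
proof (induction J arbitrary: lm v rule: finite_induct)
  case empty
  then show ?case by simp
next
  case (insert l0 J)
  define H where "H u = v l0 + (\<Sum>l\<in>J. v l * exp ((lm l - lm l0) * u))" for u
  have H0: "H u = 0" if u: "u \<in> {0<..<1}" for u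
  proof -
    have "H u = exp (- lm l0 * u) * (\<Sum>l\<in>insert l0 J. v l * exp (lm l * u))"
      unfolding H_def using insert.hyps
      by (simp add: sum_distrib_left algebra_simps mult_exp_exp[symmetric] flip: exp_add)
    then show ?thesis using insert.prems(2) u by simp
  qed
  have "\<forall>u\<in>{0<..<1}. (\<Sum>l\<in>J. (v l * (lm l - lm l0)) * exp ((lm l - lm l0) * u)) = 0"
  proof
    fix u :: real assume u: "u \<in> {0<..<1}"
    have der: "(H has_real_derivative (\<Sum>l\<in>J. v l * (exp ((lm l - lm l0) * u) * ((lm l - lm l0) * 1)))) (at u)"
      unfolding H_def by (auto intro!: derivative_eq_intros DERIV_sum sum.cong simp: algebra_simps)
    have loc: "\<forall>y. \<bar>u - y\<bar> < min u (1 - u) \<longrightarrow> H u = H y"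
    proof (intro allI impI)
      fix y assume "\<bar>u - y\<bar> < min u (1 - u)"
      then have "y \<in> {0<..<1}" using u by (auto simp: abs_less_iff)
      then show "H u = H y" using H0 u by simp
    qed
    have "(\<Sum>l\<in>J. v l * (exp ((lm l - lm l0) * u) * ((lm l - lm l0) * 1))) = 0"
      by (rule DERIV_local_const[OF der _ loc]) (use u in auto)
    then show "(\<Sum>l\<in>J. (v l * (lm l - lm l0)) * exp ((lm l - lm l0) * u)) = 0"
      by (simp add: algebra_simps)
  qed
  moreover have "inj_on (\<lambda>l. lm l - lm l0) J" using insert.prems(1) by (auto simp: inj_on_def)
  ultimately have vJ0: "\<forall>l\<in>J. v l * (lm l - lm l0) = 0"
    using insert.IH[of "\<lambda>l. lm l - lm l0" "\<lambda>l. v l * (lm l - lm l0)"] by auto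
  have vJ: "\<forall>l\<in>J. v l = 0"
  proof
    fix l assume l: "l \<in> J"
    have "lm l \<noteq> lm l0" using insert.prems(1) insert.hyps(2) l by (auto simp: inj_on_def)
    then show "v l = 0" using vJ0 l by auto
  qed
  have "H (1/2) = 0" by (rule H0) auto
  then have "v l0 = 0" unfolding H_def using vJ by simp
  with vJ show ?case by auto
qed



lemma gram_inj:
  fixes lm v :: "nat \<Rightarrow> real"
  assumes pos: "\<forall>l\<in>{1..m}. lm l > 0" and inj: "inj_on lm {1..m}"
    and h: "\<forall>j\<in>{1..m}. (\<Sum>l=1..m. (exp (lm j + lm l) - 1) / (lm j + lm l) * v l) = 0"
  shows "\<forall>l\<in>{1..m}. v l = 0"
proof -
  define g where "g u = (\<Sum>l=1..m. v l * exp (lm l * u))^2" for u :: real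
  have geq: "g u = (\<Sum>j=1..m. \<Sum>l=1..m. v j * v l * exp ((lm j + lm l) * (u - 0)))" for u
    unfolding g_def power2_eq_square sum_product
    by (intro sum.cong refl) (simp add: algebra_simps exp_add)
  have "((\<lambda>u. \<Sum>j=1..m. \<Sum>l=1..m. v j * v l * exp ((lm j + lm l) * (u - 0))) has_integral
        (\<Sum>j=1..m. \<Sum>l=1..m. v j * v l * ((exp ((lm j + lm l) * (1 - 0)) - 1) / (lm j + lm l)))) {0..1}"
  proof (intro has_integral_sum finite_atLeastAtMost)
    fix j l assume j: "j \<in> {1..m}" and l: "l \<in> {1..m}"
    have "lm j + lm l \<noteq> 0" using pos j l by (smt (verit))
    from exp_hasint[OF _ this, of 0 1]
    show "((\<lambda>u. v j * v l * exp ((lm j + lm l) * (u - 0))) has_integral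
        v j * v l * ((exp ((lm j + lm l) * (1 - 0)) - 1) / (lm j + lm l))) {0..1}"
      by (intro has_integral_mult_right) auto
  qed
  moreover have "(\<Sum>j=1..m. \<Sum>l=1..m. v j * v l * ((exp ((lm j + lm l) * (1 - 0)) - 1) / (lm j + lm l))) =
      (\<Sum>j=1..m. v j * (\<Sum>l=1..m. (exp (lm j + lm l) - 1) / (lm j + lm l) * v l))"
    by (simp add: sum_distrib_left algebra_simps)
  moreover have "\<dots> = 0" using h by simp
  ultimately have gi: "(g has_integral 0) (cbox 0 1)" unfolding geq[abs_def] by simp
  have gc: "continuous_on (cbox 0 1) g" unfolding g_def by (intro continuous_intros)
  have gz: "g u = 0" if "u \<in> {0<..<1}" for u
    by (rule has_integral_0_cbox_imp_0[OF gc _ gi]) (use that in \<open>auto simp: g_def\<close>)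
  have "\<forall>u\<in>{0<..<1}. (\<Sum>l\<in>{1..m}. v l * exp (lm l * u)) = 0"
    using gz unfolding g_def by simp
  then show ?thesis by (rule lin_indep[OF finite_atLeastAtMost inj])
qed



lemma leb_on_HK:
  fixes f :: "real \<Rightarrow> real"
  assumes "S \<in> sets lebesgue" "integrable (lebesgue_on S) f"
  shows "integral\<^sup>L (lebesgue_on S) f = integral S f"
proof -
  have "set_integrable lebesgue S f"
    using assms integrable_restrict_space[of S lebesgue f] unfolding set_integrable_def by simp
  then show ?thesis
    using lint_eq_leb_on[OF assms(1), of f] set_lebesgue_integral_eq_integral(2)[where f=f and S=S] by simp
qed

lemma exp_tends0: "(0::real) < a \<Longrightarrow> ((\<lambda>T. exp (- a * T)) \<longlongrightarrow> 0) at_top"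
proof -
  assume a: "0 < a"
  have "filterlim (\<lambda>T. a * T) at_top at_top"
    by (rule filterlim_tendsto_pos_mult_at_top[OF tendsto_const a filterlim_ident])
  then have "filterlim (\<lambda>T. - (a * T)) at_bot at_top"
    by (simp add: filterlim_uminus_at_top)
  from filterlim_compose[OF exp_at_bot this] show ?thesis by simp
qed

lemma test_meas: "(\<lambda>s. if T0 \<le> s \<and> s \<le> T0 + 1 then (\<Sum>l=1..m. b l * exp (lm l * (s - T0))) else (0::real))
   \<in> borel_measurable (lebesgue_on {0..})"
  by measurable



lemma exists_reach:
  fixes lam :: "nat \<Rightarrow> real" and c :: "nat \<Rightarrow> nat \<Rightarrow> real" and z :: "nat \<Rightarrow> real" and abar :: "nat \<Rightarrow> real"
  assumes k1: "k \<ge> 1" and abar: "\<forall>i\<in>{1..k}. abar i > 0"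
    and pos: "\<forall>l\<in>{1..m}. lam l > 0" and inj: "inj_on lam {1..m}"
    and c1: "\<forall>j\<in>{1..m}. c 1 j \<noteq> 0"
  shows "\<exists>t \<alpha>. t \<ge> 0 \<and> admissible k abar \<alpha> \<and> (\<forall>j\<in>{1..m}. Pf lam k c z j \<alpha> t = 0)"
proof -
  define G where "G j l = (exp (lam j + lam l) - 1) / (lam j + lam l)" for j l
  have inj': "\<forall>l\<in>{1..m}. v l = 0" if "\<forall>j\<in>{1..m}. (\<Sum>l=1..m. G j l * v l) = 0" for v
    using gram_inj[OF pos inj, of v] that unfolding G_def by blast
  from solve_lin[of m G, OF inj'] obtain B where
    B0: "\<forall>w. \<forall>j\<in>{1..m}. (\<Sum>l=1..m. G j l * (\<Sum>p=1..m. B l p * w p)) = w j" by blast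
  have B: "(\<Sum>l=1..m. G j l * (\<Sum>p=1..m. B l p * w p)) = w j" if "j \<in> {1..m}" for w j
    using B0 that by blast
  define w where "w T p = - z p * exp (- lam p * T) / c 1 p" for T p
  define \<beta> where "\<beta> T l = (\<Sum>p=1..m. B l p * w T p)" for T l
  define bnd where "bnd T = (\<Sum>l=1..m. \<bar>\<beta> T l\<bar> * exp (lam l))" for T
  have wl: "((\<lambda>T. w T p) \<longlongrightarrow> 0) at_top" if p: "p \<in> {1..m}" for p
  proof -
    have "((\<lambda>T. (- z p / c 1 p) * exp (- lam p * T)) \<longlongrightarrow> (- z p / c 1 p) * 0) at_top"
      using pos p by (intro tendsto_mult tendsto_const exp_tends0) auto
    then show ?thesis unfolding w_def by simp
  qed
  have bl: "((\<lambda>T. \<beta> T l) \<longlongrightarrow> 0) at_top" for l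
    unfolding \<beta>_def by (intro tendsto_null_sum tendsto_mult_right_zero wl) auto
  have "(bnd \<longlongrightarrow> 0) at_top"
    unfolding bnd_def[abs_def] by (intro tendsto_null_sum tendsto_mult_left_zero tendsto_rabs_zero bl)
  moreover have a1: "0 < abar 1" using abar k1 by auto
  ultimately have "\<forall>\<^sub>F T in at_top. bnd T < abar 1" by (rule order_tendstoD)
  then obtain N where N: "\<And>T. T \<ge> N \<Longrightarrow> bnd T < abar 1" by (auto simp: eventually_at_top_linorder)
  define T0 where "T0 = max N 0"
  have T00: "0 \<le> T0" and bT0: "bnd T0 < abar 1" using N unfolding T0_def by auto
  define g where "g s = (\<Sum>l=1..m. \<beta> T0 l * exp (lam l * (s - T0)))" for s
  define \<alpha> where "\<alpha> (i::nat) (s::real) = (if i = 1 then (if T0 \<le> s \<and> s \<le> T0 + 1 then g s else 0) else 0)" for i s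
  have gb: "\<bar>g s\<bar> \<le> bnd T0" if "T0 \<le> s" "s \<le> T0 + 1" for s
  proof -
    have "\<bar>g s\<bar> \<le> (\<Sum>l=1..m. \<bar>\<beta> T0 l * exp (lam l * (s - T0))\<bar>)" unfolding g_def by (rule sum_abs)
    also have "\<dots> \<le> bnd T0" unfolding bnd_def
    proof (rule sum_mono)
      fix l assume l: "l \<in> {1..m}"
      have "0 < lam l" using pos l by auto
      then have "lam l * (s - T0) \<le> lam l * 1" using that by (intro mult_left_mono) auto
      then show "\<bar>\<beta> T0 l * exp (lam l * (s - T0))\<bar> \<le> \<bar>\<beta> T0 l\<bar> * exp (lam l)"
        by (simp add: abs_mult mult_left_mono)
    qed
    finally show ?thesis .
  qed
  have adm: "admissible k abar \<alpha>" unfolding admissible_def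
  proof (intro ballI conjI allI impI)
    fix i assume i: "i \<in> {1..k}"
    show "\<alpha> i \<in> borel_measurable (lebesgue_on {0..})"
      unfolding \<alpha>_def g_def by measurable
    fix s :: real assume "0 \<le> s"
    show "\<bar>\<alpha> i s\<bar> \<le> abar i"
      using gb[of s] bT0 abar i unfolding \<alpha>_def by (auto simp: less_imp_le)
  qed
  have I1: "integral\<^sup>L (lebesgue_on {0..T0 + 1}) (\<lambda>s. exp (lam j * s) * \<alpha> 1 s) = exp (lam j * T0) * w T0 j"
    if j: "j \<in> {1..m}" for j
  proof -
    have "integral\<^sup>L (lebesgue_on {0..T0 + 1}) (\<lambda>s. exp (lam j * s) * \<alpha> 1 s) = integral {0..T0 + 1} (\<lambda>s. exp (lam j * s) * \<alpha> 1 s)"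
      by (rule leb_on_HK) (use adm_int[OF adm, of 1 0 "T0 + 1" "lam j"] k1 in auto)
    also have "\<dots> = exp (lam j * T0) * w T0 j"
    proof (rule integral_unique)
      have e: "(\<lambda>s. exp (lam j * s) * \<alpha> 1 s) = (\<lambda>s. if s \<in> cbox T0 (T0 + 1) then exp (lam j * s) * g s else 0)"
        unfolding \<alpha>_def by auto
      have "((\<lambda>s. exp (lam j * s) * g s) has_integral (\<Sum>l=1..m. exp (lam j * T0) * \<beta> T0 l * G j l)) {T0..T0 + 1}"
      proof -
        have "((\<lambda>s. \<Sum>l=1..m. exp (lam j * T0) * \<beta> T0 l * exp ((lam j + lam l) * (s - T0))) has_integral
           (\<Sum>l=1..m. exp (lam j * T0) * \<beta> T0 l * G j l)) {T0..T0 + 1}"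
        proof (intro has_integral_sum finite_atLeastAtMost)
          fix l assume l: "l \<in> {1..m}"
          have "lam j + lam l \<noteq> 0" using pos j l by (smt (verit))
          from exp_hasint[OF _ this, of T0 "T0 + 1"]
          show "((\<lambda>s. exp (lam j * T0) * \<beta> T0 l * exp ((lam j + lam l) * (s - T0))) has_integral
              exp (lam j * T0) * \<beta> T0 l * G j l) {T0..T0 + 1}"
            unfolding G_def by (intro has_integral_mult_right) auto
        qed
        moreover have "(\<lambda>s. \<Sum>l=1..m. exp (lam j * T0) * \<beta> T0 l * exp ((lam j + lam l) * (s - T0))) = (\<lambda>s. exp (lam j * s) * g s)"
          unfolding g_def sum_distrib_left
          by (intro ext sum.cong refl) (simp add: algebra_simps flip: exp_add)
        ultimately show ?thesis by simp
      qed
      moreover have "(\<Sum>l=1..m. exp (lam j * T0) * \<beta> T0 l * G j l) = exp (lam j * T0) * w T0 j"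
      proof -
        have "(\<Sum>l=1..m. exp (lam j * T0) * \<beta> T0 l * G j l) = exp (lam j * T0) * (\<Sum>l=1..m. G j l * \<beta> T0 l)"
          by (simp add: sum_distrib_left algebra_simps)
        also have "(\<Sum>l=1..m. G j l * \<beta> T0 l) = w T0 j" unfolding \<beta>_def by (rule B[OF j])
        finally show ?thesis .
      qed
      ultimately have "((\<lambda>s. exp (lam j * s) * g s) has_integral exp (lam j * T0) * w T0 j) (cbox T0 (T0 + 1))" by simp
      then show "((\<lambda>s. exp (lam j * s) * \<alpha> 1 s) has_integral exp (lam j * T0) * w T0 j) {0..T0 + 1}"
        unfolding e using T00 by (subst cbox_interval[symmetric], subst has_integral_restrict_closed_subintervals_eq) auto
    qed
    finally show ?thesis .
  qed
  show ?thesis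
  proof (intro exI conjI ballI)
    show "0 \<le> T0 + 1" using T00 by simp
    show "admissible k abar \<alpha>" by (rule adm)
    fix j assume j: "j \<in> {1..m}"
    have "(\<Sum>i=1..k. integral\<^sup>L (lebesgue_on {0..T0 + 1}) (\<lambda>s. exp (lam j * s) * \<alpha> i s) * c i j)
        = (\<Sum>i\<in>{1..k}. if i = 1 then exp (lam j * T0) * w T0 j * c 1 j else 0)"
      apply (rule sum.cong[OF refl])
      subgoal for i
      proof (cases "i = 1")
        case True then show ?thesis using I1[OF j] by simp
      next
        case False then show ?thesis by (simp add: \<alpha>_def)
      qed
      done
    also have "\<dots> = exp (lam j * T0) * w T0 j * c 1 j" using k1 by simp
    also have "\<dots> = - z j"
      using c1 j unfolding w_def by (simp add: field_simps mult_exp_exp)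
    finally show "Pf lam k c z j \<alpha> (T0 + 1) = 0" unfolding Pf_def by simp
  qed
qed



lemma strict_lam:
  fixes lam :: "nat \<Rightarrow> real"
  assumes D1: "\<forall>i\<in>{1..<m}. lam i < lam (Suc i)"
  shows "1 \<le> a \<Longrightarrow> a < b \<Longrightarrow> b \<le> m \<Longrightarrow> lam a < lam b"
proof (induction b arbitrary: a)
  case 0 then show ?case by simp
next
  case (Suc b)
  show ?case
  proof (cases "a = b")
    case True then show ?thesis using D1 Suc.prems by auto
  next
    case False
    then have "lam a < lam b" using Suc by auto
    also have "lam b < lam (Suc b)" using D1 Suc.prems by auto
    finally show ?thesis .
  qed
qed

theorem theorem3p1:
  fixes \<Omega> \<omega> :: "'a::euclidean_space set"
    and \<xi> :: "nat \<Rightarrow> 'a \<Rightarrow> real" and lam :: "nat \<Rightarrow> real"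
    and m k :: nat
  assumes "bounded \<Omega>" and "open \<Omega>" and "connected \<Omega>" and "\<Omega> \<noteq> {}"
    and "open \<omega>" and "\<omega> \<noteq> {}" and "\<omega> \<subseteq> \<Omega>"
    and "orthonormal_basis_L2 \<Omega> \<xi>"
    and "\<forall>i\<ge>1. dirichlet_eigenfun \<Omega> (\<xi> i) (lam i)"
    and "0 < lam 1" and "lam 1 < lam 2" and "\<forall>i\<ge>2. lam i \<le> lam (Suc i)"
    and "filterlim lam at_top sequentially"
    and "m \<ge> 2" and "k \<ge> 1"
    and D1: "\<forall>i\<in>{1..<m}. lam i < lam (Suc i)"
    and D2: "\<forall>i\<in>{1..m}. \<forall>j\<in>{1..k}. l2_inner \<Omega> (\<lambda>x. indicator \<omega> x * \<xi> i x) (\<xi> j) \<noteq> 0"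
  shows "\<forall>y0 \<in> L2 \<Omega>. y0 \<notin> S_set \<Omega> \<xi> m \<longrightarrow>
           (\<forall>abar :: nat \<Rightarrow> real. (\<forall>i\<in>{1..k}. abar i > 0) \<longrightarrow>
              has_optimal_control \<Omega> \<omega> \<xi> lam m k abar y0)"

proof (intro ballI impI allI)
  fix y0 and abar :: "nat \<Rightarrow> real"
  assume y0: "y0 \<in> L2 \<Omega>" "y0 \<notin> S_set \<Omega> \<xi> m" and ab: "\<forall>i\<in>{1..k}. 0 < abar i"
  define c where "c i j = l2_inner \<Omega> (\<lambda>x. indicator \<omega> x * \<xi> i x) (\<xi> j)" for i j
  define z where "z j = l2_inner \<Omega> y0 (\<xi> j)" for j
  define Ts where "Ts = {t. t \<ge> 0 \<and> (\<exists>\<alpha>. admissible k abar \<alpha> \<and> (\<forall>j\<in>{1..m}. Pf lam k c z j \<alpha> t = 0))}"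
  have reach: "reaches \<Omega> \<omega> \<xi> lam m k \<alpha> y0 t \<longleftrightarrow> (\<forall>j\<in>{1..m}. Pf lam k c z j \<alpha> t = 0)" for \<alpha> t
    unfolding reaches_Pf c_def z_def ..
  have mono: "lam a < lam b" if "1 \<le> a" "a < b" "b \<le> m" for a b
    using strict_lam[OF D1] that by blast
  have pos: "\<forall>l\<in>{1..m}. lam l > 0"
  proof
    fix l assume l: "l \<in> {1..m}"
    show "lam l > 0"
    proof (cases "l = 1")
      case True then show ?thesis using assms(10) by simp
    next
      case False then have "lam 1 < lam l" using l mono[of 1 l] by auto
      then show ?thesis using assms(10) by simp
    qed
  qed
  have inj: "inj_on lam {1..m}"
  proof (rule inj_onI)
    fix a b assume ab: "a \<in> {1..m}" "b \<in> {1..m}" "lam a = lam b"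
    show "a = b"
    proof (rule ccontr)
      assume "a \<noteq> b"
      then have "a < b \<or> b < a" by auto
      then show False using mono[of a b] mono[of b a] ab by auto
    qed
  qed
  have c1: "\<forall>j\<in>{1..m}. c 1 j \<noteq> 0"
  proof
    fix j assume j: "j \<in> {1..m}"
    have "l2_inner \<Omega> (\<lambda>x. indicator \<omega> x * \<xi> j x) (\<xi> 1) \<noteq> 0" using D2 j assms(15) by auto
    moreover have "l2_inner \<Omega> (\<lambda>x. indicator \<omega> x * \<xi> j x) (\<xi> 1) = c 1 j"
      unfolding c_def l2_inner_def by (simp add: ac_simps)
    ultimately show "c 1 j \<noteq> 0" by simp
  qed
  obtain t0 \<alpha>0 where "t0 \<ge> 0" "admissible k abar \<alpha>0" "\<forall>j\<in>{1..m}. Pf lam k c z j \<alpha>0 t0 = 0"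
    using exists_reach[where z=z and c=c and lam=lam and m=m and k=k and abar=abar, OF assms(15) ab pos inj c1] by blast
  then have ne: "Ts \<noteq> {}" unfolding Ts_def by blast
  obtain \<alpha> where \<alpha>: "admissible k abar \<alpha>" "\<forall>j\<in>{1..m}. Pf lam k c z j \<alpha> (Inf Ts) = 0"
    using attain[OF ab Ts_def ne] by blast
  have ts0: "0 \<le> Inf Ts" using ne by (intro cInf_greatest) (auto simp: Ts_def)
  have TsEq: "{t. t \<ge> 0 \<and> (\<exists>\<alpha>. admissible k abar \<alpha> \<and> reaches \<Omega> \<omega> \<xi> lam m k \<alpha> y0 t)} = Ts"
    unfolding Ts_def reach ..
  show "has_optimal_control \<Omega> \<omega> \<xi> lam m k abar y0"
    unfolding has_optimal_control_def TsEq
    using \<alpha> ts0 reach by blast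
qed


end
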